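(* Let $\mathcal X$ be a Banach space, $E\subset\mathcal X$ convex, $\hat\phi_i:\mathcal X\to\mathbb R$ ($i=0,\dots,j$), $\hat\psi:\mathcal X\to\mathbb R^k$ with $k\ge1$. Let $\bar e\in E$ be a minimizer of (OP) with $\hat\phi_0(\bar e)=0$, and assume (C5). Let $y\in T^\flat_E(\bar e)$ satisfy $D\hat\phi_i(\bar e)(y)\le0$ for $i\in\hat I_A$, $D\hat\psi(\bar e)(y)=0$, and $T_E^{\flat(2)}(\bar e,y)\ne\emptyset$. Set $\hat I_0'=\hat I_N\cup\{i\in\hat I_A:D\hat\phi_i(\bar e)(y)<0\}$, $\hat I_0''=\{0,\dots,j\}\setminus\hat I_0'$, $$\mathcal K=\{D\hat\Phi_{\hat I_0''}(\bar e)(x)+\tfrac12D^2\hat\Phi_{\hat I_0''}(\bar e)(y):x\in T_E^{\flat(2)}(\bar e,y)\}\subset\mathbb R^{1+j+k},$$ $$\mathcal K^{\hat\psi}=\{D\hat\psi(\bar e)(x)+\tfrac12D^2\hat\psi(\bar e)(y):x\in T_E^{\flat(2)}(\bar e,y)\}\subset\mathbb R^k.$$ Then $\mathcal K$ and $\mathcal K^{\hat\psi}$ are convex. Moreover, let $Y=(Y_0,\dots,Y_j)^\top$ with $Y_i=D\hat\phi_i(\bar e)(y)$ for $i\in\hat I_A$ and $Y_i=0$ otherwise, and $Z=(-\infty,0)^{j+1}-\{\lambda(\hat\phi(\bar e)+Y):\lambda>0\}$, where $\hat\phi=(\hat\phi_0,\dots,\hat\phi_j)^\top$. If there is no $\ell\in\mathbb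 R^{1+j+k}\setminus\{0\}$ with $$\ell^\top\big(D\hat\Phi_{\hat I_0''}(\bar e)(x)+\tfrac12D^2\hat\Phi_{\hat I_0''}(\bar e)(y)\big)\le\ell^\top(z^\top,0)^\top\quad\forall x\in T_E^{\flat(2)}(\bar e,y),\ \forall z\in Z,$$ then the affine hull $\mathrm{aff}\,\mathcal K^{\hat\psi}$ is a linear subspace of $\mathbb R^k$ of dimension $D(\mathcal K^{\hat\psi})>0$, and there exist $h_1,\dots,h_{D(\mathcal K^{\hat\psi})+1}\in T^{\flat(2)}_E(\bar e,y)$ and $\delta_0>0$ such that $$B_{\mathrm{aff}\,\mathcal K^{\hat\psi}}(\delta_0)\subseteq\mathrm{Int}\,\mathrm{co}\{D\hat\psi(\bar e)(h_l)+\tfrac12D^2\hat\psi(\bar e)(y)\}_{l=1}^{D(\mathcal K^{\hat\psi})+1}$$ and $D\hat\phi_i(\bar e)(h_l)+\frac12D^2\hat\phi_i(\bar e)(y)<0$ for all $l=1,\dots,D(\mathcal K^{\hat\psi})+1$ and all $i\in\hat I_0''$. Here $B_{\mathrm{aff}\,\mathcal K^{\hat\psi}}(\delta_0)$ is the closed ball of radius $\delta_0$ centered at $0$ in that subspace, and Int is the interior relative to that subspace.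
   Context: (OP): minimize $\hat\phi_0(e)$ over $e\in E$ subject to $\hat\phi_i(e)\le0$ ($i=1,\dots,j$) and $\hat\psi(e)=0$. $\hat\Phi=(\hat\phi_0,\dots,\hat\phi_j,\hat\psi_1,\dots,\hat\psi_k)^\top$; for $I\subseteq\{0,\dots,j\}$, $\hat\Phi_I$ is $\hat\Phi$ with the components $\hat\phi_i$, $i\notin I$, replaced by $0$ (same for $D\hat\Phi_I$, $D^2\hat\Phi_I$). $\hat I_A=\{i\in\{1,\dots,j\}:\hat\phi_i(\bar e)=0\}\cup\{0\}$, $\hat I_N=\{i\in\{1,\dots,j\}:\hat\phi_i(\bar e)<0\}$. (C5): $\hat\Phi$ is Fréchet differentiable at $\bar e$ with derivative $D\hat\Phi(\bar e)$ (components $D\hat\phi_i(\bar e)$, $D\hat\psi_l(\bar e)$), and for each $y\in\mathcal X$ there exists a vector $D^2\hat\Phi(\bar e)(y)\in\mathbb R^{1+j+k}$ (components $D^2\hat\phi_i(\bar e)(y)$, $D^2\hat\psi_l(\bar e)(y)$) such that for all $\alpha>0$, $C>0$ there is $\epsilon_0>0$ with $|\hat\Phi(\bar e+\epsilon y+\epsilon^2\eta)-\hat\Phi(\bar e)-\epsilon D\hat\Phi(\bar e)(y)-\epsilon^2D\hat\Phi(\bar e)(\eta)-\frac12\epsilon^2D^2\hat\Phi(\bar e)(y)|\le\alpha\epsilon^2$ for all $\eta$ with $|\eta|\le C$ and $\epsilon\in[0,\epsilon_0]$. Tangent sets: $v\in T_E^\flat(x)$ iff for every $h_n\to0^+$ there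 are $v_n\to v$ with $x+h_nv_n\in E$; for $v\in T_E^\flat(x)$, $w\in T_E^{\flat(2)}(x,v)$ iff for every $h_n\to0^+$ there are $w_n\to w$ with $x+h_nv+h_n^2w_n\in E$. *)

theory Defs
  imports "HOL-Analysis.Analysis"
begin

text \<open>Index set \{0,...,j\} is modelled by a finite type 'm with a distinguished
  element i0 (playing the role of the objective index 0).  Vectors of R^(1+j+k)
  are elements of real^'m \<times> real^'k (Euclidean norm / inner product).\<close>

definition vecPhi :: "('m::finite \<Rightarrow> 'x \<Rightarrow> real) \<Rightarrow> ('x \<Rightarrow> real^'k) \<Rightarrow> 'x \<Rightarrow> (real^'m) \<times> (real^'k)"
  where "vecPhi \<phi> \<psi> e = ((\<chi> i. \<phi> i e), \<psi> e)"

definition vecPhiI :: "'m set \<Rightarrow> ('m::finite \<Rightarrow> 'x \<Rightarrow> real) \<Rightarrow> ('x \<Rightarrow> real^'k) \<Rightarrow> 'x \<Rightarrow> (real^'m) \<times> (real^'k)"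
  where "vecPhiI I \<phi> \<psi> e = ((\<chi> i. if i \<in> I then \<phi> i e else 0), \<psi> e)"

definition feasible_OP :: "'x set \<Rightarrow> 'm \<Rightarrow> ('m \<Rightarrow> 'x \<Rightarrow> real) \<Rightarrow> ('x \<Rightarrow> 'v::zero) \<Rightarrow> 'x \<Rightarrow> bool"
  where "feasible_OP E i0 \<phi> \<psi> e \<longleftrightarrow> e \<in> E \<and> (\<forall>i. i \<noteq> i0 \<longrightarrow> \<phi> i e \<le> 0) \<and> \<psi> e = 0"

definition minimizer_OP :: "'x set \<Rightarrow> 'm \<Rightarrow> ('m \<Rightarrow> 'x \<Rightarrow> real) \<Rightarrow> ('x \<Rightarrow> 'v::zero) \<Rightarrow> 'x \<Rightarrow> bool"
  where "minimizer_OP E i0 \<phi> \<psi> eb \<longleftrightarrow> feasible_OP E i0 \<phi> \<psi> eb \<and>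
           (\<forall>e. feasible_OP E i0 \<phi> \<psi> e \<longrightarrow> \<phi> i0 eb \<le> \<phi> i0 e)"

definition cond_C5 :: "('m::finite \<Rightarrow> 'x::real_normed_vector \<Rightarrow> real) \<Rightarrow> ('x \<Rightarrow> real^'k)
     \<Rightarrow> ('m \<Rightarrow> 'x \<Rightarrow> real) \<Rightarrow> ('x \<Rightarrow> real^'k) \<Rightarrow> ('m \<Rightarrow> 'x \<Rightarrow> real) \<Rightarrow> ('x \<Rightarrow> real^'k) \<Rightarrow> 'x \<Rightarrow> bool"
  where "cond_C5 \<phi> \<psi> D\<phi> D\<psi> D2\<phi> D2\<psi> eb \<longleftrightarrow>
     (vecPhi \<phi> \<psi> has_derivative vecPhi D\<phi> D\<psi>) (at eb) \<and>
     (\<forall>y \<alpha> C. \<alpha> > 0 \<longrightarrow> C > 0 \<longrightarrow> (\<exists>\<epsilon>0>0. \<forall>\<eta> \<epsilon>. norm \<eta> \<le> C \<longrightarrow> 0 \<le> \<epsilon> \<longrightarrow> \<epsilon> \<le> \<epsilon>0 \<longrightarrow>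
        norm (vecPhi \<phi> \<psi> (eb + \<epsilon> *\<^sub>R y + \<epsilon>\<^sup>2 *\<^sub>R \<eta>) - vecPhi \<phi> \<psi> eb
              - \<epsilon> *\<^sub>R vecPhi D\<phi> D\<psi> y - \<epsilon>\<^sup>2 *\<^sub>R vecPhi D\<phi> D\<psi> \<eta>
              - (\<epsilon>\<^sup>2 / 2) *\<^sub>R vecPhi D2\<phi> D2\<psi> y) \<le> \<alpha> * \<epsilon>\<^sup>2))"

definition adj_tangent :: "'x::real_normed_vector set \<Rightarrow> 'x \<Rightarrow> 'x set"
  where "adj_tangent E x = {v. \<forall>h::nat \<Rightarrow> real. (\<forall>n. h n > 0) \<and> h \<longlonglongrightarrow> 0 \<longrightarrow>
            (\<exists>vn. vn \<longlonglongrightarrow> v \<and> (\<forall>n. x + h n *\<^sub>R vn n \<in> E))}"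

definition adj_tangent2 :: "'x::real_normed_vector set \<Rightarrow> 'x \<Rightarrow> 'x \<Rightarrow> 'x set"
  where "adj_tangent2 E x v = {w. \<forall>h::nat \<Rightarrow> real. (\<forall>n. h n > 0) \<and> h \<longlonglongrightarrow> 0 \<longrightarrow>
            (\<exists>wn. wn \<longlonglongrightarrow> w \<and> (\<forall>n. x + h n *\<^sub>R v + (h n)\<^sup>2 *\<^sub>R wn n \<in> E))}"

end

theory Submission
  imports Defs
begin

lemma adj_tangent2_convex:
  fixes E :: "'x::real_normed_vector set"
  assumes "convex E" shows "convex (adj_tangent2 E x v)"
  unfolding convex_def
proof (intro ballI allI impI)
  fix w1 w2 and u w :: real
  assume w1: "w1 \<in> adj_tangent2 E x v" and w2: "w2 \<in> adj_tangent2 E x v"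
     and uw: "0 \<le> u" "0 \<le> w" "u + w = 1"
  show "u *\<^sub>R w1 + w *\<^sub>R w2 \<in> adj_tangent2 E x v"
    unfolding adj_tangent2_def
  proof (intro CollectI allI impI)
    fix h :: "nat \<Rightarrow> real" assume h: "(\<forall>n. 0 < h n) \<and> h \<longlonglongrightarrow> 0"
    obtain a where a: "a \<longlonglongrightarrow> w1" "\<forall>n. x + h n *\<^sub>R v + (h n)\<^sup>2 *\<^sub>R a n \<in> E"
      using w1 h unfolding adj_tangent2_def by blast
    obtain b where b: "b \<longlonglongrightarrow> w2" "\<forall>n. x + h n *\<^sub>R v + (h n)\<^sup>2 *\<^sub>R b n \<in> E"
      using w2 h unfolding adj_tangent2_def by blast
    have "(\<lambda>n. u *\<^sub>R a n + w *\<^sub>R b n) \<longlonglongrightarrow> u *\<^sub>R w1 + w *\<^sub>R w2"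
      by (intro tendsto_intros a b)
    moreover have "x + h n *\<^sub>R v + (h n)\<^sup>2 *\<^sub>R (u *\<^sub>R a n + w *\<^sub>R b n) \<in> E" for n
    proof -
      have "x + h n *\<^sub>R v + (h n)\<^sup>2 *\<^sub>R (u *\<^sub>R a n + w *\<^sub>R b n) =
        u *\<^sub>R (x + h n *\<^sub>R v + (h n)\<^sup>2 *\<^sub>R a n) + w *\<^sub>R (x + h n *\<^sub>R v + (h n)\<^sup>2 *\<^sub>R b n)"
        proof -
        have wu: "w = 1 - u" using uw(3) by simp
        show ?thesis unfolding wu by (simp add: algebra_simps)
      qed
      thus ?thesis using convexD[OF assms a(2)[rule_format, of n] b(2)[rule_format, of n] uw] by simp
    qed
    ultimately show "\<exists>wn. wn \<longlonglongrightarrow> u *\<^sub>R w1 + w *\<^sub>R w2 \<and>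
          (\<forall>n. x + h n *\<^sub>R v + (h n)\<^sup>2 *\<^sub>R wn n \<in> E)" by blast
  qed
qed

lemma convex_affine_image:
  assumes "convex S" and "\<And>a b u v. a \<in> S \<Longrightarrow> b \<in> S \<Longrightarrow> u + v = 1 \<Longrightarrow> f (u *\<^sub>R a + v *\<^sub>R b) = u *\<^sub>R f a + v *\<^sub>R f b"
  shows "convex (f ` S)"
  unfolding convex_def
proof (intro ballI allI impI)
  fix p q and u v :: real assume "p \<in> f ` S" "q \<in> f ` S" "0 \<le> u" "0 \<le> v" "u + v = 1"
  then obtain a b where "a \<in> S" "b \<in> S" "p = f a" "q = f b" by blast
  then show "u *\<^sub>R p + v *\<^sub>R q \<in> f ` S"
    using assms(2)[of a b u v] convexD[OF assms(1) \<open>a \<in> S\<close> \<open>b \<in> S\<close>] \<open>0 \<le> u\<close> \<open>0 \<le> v\<close> \<open>u + v = 1\<close>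
    by (metis image_eqI)
qed

lemma convcomb_neg:
  fixes a b u v :: real
  assumes "0 \<le> u" "0 \<le> v" "u + v = 1" "a < 0" "b < 0"
  shows "u * a + v * b < 0"
proof (cases "u > 0")
  case True
  then have "u * a < 0" using assms by (simp add: mult_pos_neg)
  moreover have "v * b \<le> 0" using assms by (simp add: mult_nonneg_nonpos)
  ultimately show ?thesis by linarith
next
  case False
  then have "u = 0" using assms by linarith
  then show ?thesis using assms by simp
qed

lemma main_helper:
  fixes E :: "'x::banach set"
    and i0 :: "'m::finite"
    and \<phi> D\<phi> D2\<phi> :: "'m \<Rightarrow> 'x \<Rightarrow> real"
    and \<psi> D\<psi> D2\<psi> :: "'x \<Rightarrow> real^'k::finite"
    and eb y :: 'x
  assumes convE: "convex E"
    and minim: "minimizer_OP E i0 \<phi> \<psi> eb"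
    and phi0: "\<phi> i0 eb = 0"
    and C5: "cond_C5 \<phi> \<psi> D\<phi> D\<psi> D2\<phi> D2\<psi> eb"
    and y_IA: "\<forall>i \<in> {i. i \<noteq> i0 \<and> \<phi> i eb = 0} \<union> {i0}. D\<phi> i y \<le> 0"
    and IA_def: "IA = {i. i \<noteq> i0 \<and> \<phi> i eb = 0} \<union> {i0}"
    and IN_def: "IN = {i. i \<noteq> i0 \<and> \<phi> i eb < 0}"
    and I0'_def: "I0' = IN \<union> {i \<in> IA. D\<phi> i y < 0}"
    and I0''_def: "I0'' = UNIV - I0'"
    and T2_def: "T2 = adj_tangent2 E eb y"
    and K_def: "K = {vecPhiI I0'' D\<phi> D\<psi> x + (1/2) *\<^sub>R vecPhiI I0'' D2\<phi> D2\<psi> y | x. x \<in> T2}"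
    and Kpsi_def: "K\<psi> = {D\<psi> x + (1/2) *\<^sub>R D2\<psi> y | x. x \<in> T2}"
    and Y_def: "Y = ((\<chi> i. if i \<in> IA then D\<phi> i y else 0) :: real^'m)"
    and Z_def: "Z = {z - lam *\<^sub>R ((\<chi> i. \<phi> i eb) + Y) | z lam. (\<forall>i. z $ i < 0) \<and> lam > 0}"
    and A_def: "A = affine hull K\<psi>"
    and d_def: "d = dim A"
  shows "convex K \<and> convex K\<psi> \<and>
       ((\<nexists>L :: (real^'m) \<times> (real^'k). L \<noteq> 0 \<and>
            (\<forall>x \<in> T2. \<forall>z \<in> Z. L \<bullet> (vecPhiI I0'' D\<phi> D\<psi> x + (1/2) *\<^sub>R vecPhiI I0'' D2\<phi> D2\<psi> y)
                                 \<le> L \<bullet> (z, 0))) \<longrightarrow>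
        (subspace A \<and> d > 0 \<and>
         (\<exists>h :: nat \<Rightarrow> 'x. (\<forall>l \<in> {1..d+1}. h l \<in> T2) \<and>
            (\<exists>\<delta>0 > 0. {v \<in> A. norm v \<le> \<delta>0}
                 \<subseteq> (top_of_set A) interior_of
                     (convex hull {D\<psi> (h l) + (1/2) *\<^sub>R D2\<psi> y | l. l \<in> {1..d+1}})) \<and>
            (\<forall>l \<in> {1..d+1}. \<forall>i \<in> I0''. D\<phi> i (h l) + (1/2) * D2\<phi> i y < 0))))"
proof -
  have lin: "linear (vecPhi D\<phi> D\<psi>)"
    using C5 unfolding cond_C5_def by (blast dest: has_derivative_linear)
  have linphi: "D\<phi> i (u *\<^sub>R a + v *\<^sub>R b) = u * D\<phi> i a + v * D\<phi> i b" for i u v a b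
  proof -
    have "vecPhi D\<phi> D\<psi> (u *\<^sub>R a + v *\<^sub>R b) = u *\<^sub>R vecPhi D\<phi> D\<psi> a + v *\<^sub>R vecPhi D\<phi> D\<psi> b"
      using lin by (simp add: real_vector.linear_add real_vector.linear_scale)
    then show ?thesis unfolding vecPhi_def by (simp add: vec_eq_iff)
  qed
  have linpsi: "D\<psi> (u *\<^sub>R a + v *\<^sub>R b) = u *\<^sub>R D\<psi> a + v *\<^sub>R D\<psi> b" for u v a b
  proof -
    have "vecPhi D\<phi> D\<psi> (u *\<^sub>R a + v *\<^sub>R b) = u *\<^sub>R vecPhi D\<phi> D\<psi> a + v *\<^sub>R vecPhi D\<phi> D\<psi> b"
      using lin by (simp add: real_vector.linear_add real_vector.linear_scale)
    then show ?thesis unfolding vecPhi_def by simp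
  qed
  define Kf where "Kf x = vecPhiI I0'' D\<phi> D\<psi> x + (1/2) *\<^sub>R vecPhiI I0'' D2\<phi> D2\<psi> y" for x
  define Kp where "Kp x = D\<psi> x + (1/2) *\<^sub>R D2\<psi> y" for x
  define kphi where "kphi i x = D\<phi> i x + (1/2) * D2\<phi> i y" for i x
  have Kf_fst: "fst (Kf x) $ i = (if i \<in> I0'' then kphi i x else 0)" for x i
    unfolding Kf_def kphi_def vecPhiI_def by simp
  have Kf_snd: "snd (Kf x) = Kp x" for x
    unfolding Kf_def Kp_def vecPhiI_def by simp
  have Kp_aff: "Kp (u *\<^sub>R a + v *\<^sub>R b) = u *\<^sub>R Kp a + v *\<^sub>R Kp b" if "u + v = 1" for u v a b
  proof -
    have "u *\<^sub>R Kp a + v *\<^sub>R Kp b = u *\<^sub>R D\<psi> a + v *\<^sub>R D\<psi> b + (u + v) *\<^sub>R ((1/2) *\<^sub>R D2\<psi> y)"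
      unfolding Kp_def scaleR_add_right scaleR_add_left by simp
    then show ?thesis unfolding Kp_def linpsi that by simp
  qed
  have kphi_aff: "kphi i (u *\<^sub>R a + v *\<^sub>R b) = u * kphi i a + v * kphi i b" if "u + v = 1" for i u v a b
  proof -
    have "u * kphi i a + v * kphi i b = u * D\<phi> i a + v * D\<phi> i b + (u + v) * ((1/2) * D2\<phi> i y)"
      unfolding kphi_def distrib_left distrib_right by simp
    then show ?thesis unfolding kphi_def linphi that by simp
  qed
  have Kf_aff: "Kf (u *\<^sub>R a + v *\<^sub>R b) = u *\<^sub>R Kf a + v *\<^sub>R Kf b" if "u + v = 1" for u v a b
    by (rule prod_eqI) (auto simp: vec_eq_iff Kf_fst Kf_snd Kp_aff kphi_aff that)
  have convT2: "convex T2" unfolding T2_def by (rule adj_tangent2_convex[OF convE])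
  have K_eq: "K = Kf ` T2" unfolding K_def Kf_def by blast
  have Kpsi_eq: "K\<psi> = Kp ` T2" unfolding Kpsi_def Kp_def by blast
  have convK: "convex K" unfolding K_eq by (rule convex_affine_image[OF convT2 Kf_aff])
  have convKpsi: "convex K\<psi>" unfolding Kpsi_eq by (rule convex_affine_image[OF convT2 Kp_aff])
  have feas: "\<forall>i. i \<noteq> i0 \<longrightarrow> \<phi> i eb \<le> 0"
    using minim unfolding minimizer_OP_def feasible_OP_def by blast
  have c0: "(\<chi> i. \<phi> i eb) $ i + Y $ i = 0" if "i \<in> I0''" for i
  proof -
    from that have nIN: "i \<notin> IN" and nneg: "\<not> (i \<in> IA \<and> D\<phi> i y < 0)"
      by (auto simp: I0''_def I0'_def)
    have e0: "\<phi> i eb = 0"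
    proof (cases "i = i0")
      case True then show ?thesis using phi0 by simp
    next
      case False then show ?thesis using feas nIN unfolding IN_def by force
    qed
    then have iIA: "i \<in> IA" unfolding IA_def by auto
    then have "D\<phi> i y \<le> 0" using y_IA unfolding IA_def by blast
    then have "D\<phi> i y = 0" using nneg iIA by linarith
    then show ?thesis using e0 iIA by (simp add: Y_def)
  qed
  have Z_neg: "z $ i < 0" if zZ: "z \<in> Z" and iI: "i \<in> I0''" for z i
  proof -
    obtain z' lam where zz: "z = z' - lam *\<^sub>R ((\<chi> i. \<phi> i eb) + Y)" "\<forall>i. z' $ i < 0"
      using zZ unfolding Z_def by blast
    have "z $ i = z' $ i - lam * ((\<chi> i. \<phi> i eb) $ i + Y $ i)" using zz(1) by simp
    then show ?thesis using c0[OF iI] zz(2) by simp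
  qed
  have convZ: "convex Z"
    unfolding convex_def
  proof (intro ballI allI impI)
    fix p q and u v :: real
    assume p: "p \<in> Z" and q: "q \<in> Z" and uv: "0 \<le> u" "0 \<le> v" "u + v = 1"
    obtain z1 l1 where z1: "p = z1 - l1 *\<^sub>R ((\<chi> i. \<phi> i eb) + Y)" "\<forall>i. z1 $ i < 0" "l1 > 0"
      using p unfolding Z_def by blast
    obtain z2 l2 where z2: "q = z2 - l2 *\<^sub>R ((\<chi> i. \<phi> i eb) + Y)" "\<forall>i. z2 $ i < 0" "l2 > 0"
      using q unfolding Z_def by blast
    have "u *\<^sub>R p + v *\<^sub>R q = (u *\<^sub>R z1 + v *\<^sub>R z2) - (u * l1 + v * l2) *\<^sub>R ((\<chi> i. \<phi> i eb) + Y)"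
      unfolding z1(1) z2(1) by (simp add: algebra_simps)
    moreover have "\<forall>i. (u *\<^sub>R z1 + v *\<^sub>R z2) $ i < 0"
      using convcomb_neg[OF uv] z1(2) z2(2) by simp
    moreover have "u * l1 + v * l2 > 0"
      using convcomb_neg[OF uv, of "-l1" "-l2"] z1(3) z2(3) by simp
    ultimately show "u *\<^sub>R p + v *\<^sub>R q \<in> Z" unfolding Z_def by blast
  qed
  show ?thesis
  proof (rule conjI[OF convK conjI[OF convKpsi impI]])
    assume noL: "\<nexists>L :: (real^'m) \<times> (real^'k). L \<noteq> 0 \<and>
            (\<forall>x \<in> T2. \<forall>z \<in> Z. L \<bullet> (vecPhiI I0'' D\<phi> D\<psi> x + (1/2) *\<^sub>R vecPhiI I0'' D2\<phi> D2\<psi> y)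
                                 \<le> L \<bullet> (z, 0))"
    define M where "M = {Kf x - (z, 0) | x z. x \<in> T2 \<and> z \<in> Z}"
    have convM: "convex M"
      unfolding convex_def
    proof (intro ballI allI impI)
      fix p q and u v :: real
      assume p: "p \<in> M" and q: "q \<in> M" and uv: "0 \<le> u" "0 \<le> v" "u + v = 1"
      obtain x1 z1 where 1: "p = Kf x1 - (z1, 0)" "x1 \<in> T2" "z1 \<in> Z" using p unfolding M_def by blast
      obtain x2 z2 where 2: "q = Kf x2 - (z2, 0)" "x2 \<in> T2" "z2 \<in> Z" using q unfolding M_def by blast
      have "u *\<^sub>R p + v *\<^sub>R q = Kf (u *\<^sub>R x1 + v *\<^sub>R x2) - (u *\<^sub>R z1 + v *\<^sub>R z2, 0)"
        unfolding 1(1) 2(1) Kf_aff[OF uv(3)] by (rule prod_eqI) (simp_all add: algebra_simps)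
      moreover have "u *\<^sub>R x1 + v *\<^sub>R x2 \<in> T2" using convexD[OF convT2 1(2) 2(2) uv] .
      moreover have "u *\<^sub>R z1 + v *\<^sub>R z2 \<in> Z" using convexD[OF convZ 1(3) 2(3) uv] .
      ultimately show "u *\<^sub>R p + v *\<^sub>R q \<in> M" unfolding M_def by blast
    qed
    have "0 \<in> M"
    proof (rule ccontr)
      assume "0 \<notin> M"
      from separating_hyperplane_set_0[OF convM this] obtain a where
        a: "a \<noteq> 0" "\<forall>p\<in>M. 0 \<le> a \<bullet> p" by blast
      have "\<forall>x\<in>T2. \<forall>z\<in>Z. (-a) \<bullet> (vecPhiI I0'' D\<phi> D\<psi> x + (1/2) *\<^sub>R vecPhiI I0'' D2\<phi> D2\<psi> y) \<le> (-a) \<bullet> (z, 0)"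
      proof (intro ballI)
        fix x z assume "x \<in> T2" "z \<in> Z"
        then have "Kf x - (z, 0) \<in> M" unfolding M_def by blast
        with a(2) have "0 \<le> a \<bullet> (Kf x - (z, 0))" by blast
        then show "(-a) \<bullet> (vecPhiI I0'' D\<phi> D\<psi> x + (1/2) *\<^sub>R vecPhiI I0'' D2\<phi> D2\<psi> y) \<le> (-a) \<bullet> (z, 0)"
          unfolding Kf_def by (simp add: inner_diff_right)
      qed
      moreover have "-a \<noteq> 0" using a(1) by simp
      ultimately have "\<exists>L :: (real^'m) \<times> (real^'k). L \<noteq> 0 \<and>
            (\<forall>x \<in> T2. \<forall>z \<in> Z. L \<bullet> (vecPhiI I0'' D\<phi> D\<psi> x + (1/2) *\<^sub>R vecPhiI I0'' D2\<phi> D2\<psi> y)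
                                 \<le> L \<bullet> (z, 0))" by (intro exI[of _ "-a"] conjI)
      then show False using noL by (rule notE[rotated])
    qed
    then obtain x0 z0 where x0': "0 = Kf x0 - (z0, 0)" "x0 \<in> T2" "z0 \<in> Z"
      unfolding M_def by blast
    then have x0: "x0 \<in> T2" "z0 \<in> Z" "Kf x0 = (z0, 0)"
      by (simp_all add: eq_commute[of 0])
    have Kp0: "Kp x0 = 0" using Kf_snd[of x0] x0(3) by simp
    have kphi0: "kphi i x0 < 0" if "i \<in> I0''" for i
      using Kf_fst[of x0 i] x0(3) Z_neg[OF x0(2) that] that by simp
    define T2m where "T2m = {x \<in> T2. \<forall>i\<in>I0''. kphi i x < 0}"
    define W where "W = Kp ` T2m"
    have convT2m: "convex T2m"
      unfolding convex_def
    proof (intro ballI allI impI)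
      fix p q and u v :: real
      assume p: "p \<in> T2m" and q: "q \<in> T2m" and uv: "0 \<le> u" "0 \<le> v" "u + v = 1"
      have "u *\<^sub>R p + v *\<^sub>R q \<in> T2" using convexD[OF convT2 _ _ uv] p q unfolding T2m_def by blast
      moreover have "kphi i (u *\<^sub>R p + v *\<^sub>R q) < 0" if "i \<in> I0''" for i
        unfolding kphi_aff[OF uv(3)] using convcomb_neg[OF uv] p q that unfolding T2m_def by blast
      ultimately show "u *\<^sub>R p + v *\<^sub>R q \<in> T2m" unfolding T2m_def by blast
    qed
    have convW: "convex W" unfolding W_def by (rule convex_affine_image[OF convT2m Kp_aff])
    have W0: "0 \<in> W" unfolding W_def T2m_def using x0(1) kphi0 Kp0 by force
    have H1: "\<exists>x\<in>T2. b \<bullet> Kp x < 0" if "b \<noteq> 0" for b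
    proof (rule ccontr)
      assume "\<not> ?thesis"
      then have ge: "\<forall>x\<in>T2. 0 \<le> b \<bullet> Kp x" by (auto simp: not_less)
      have "((0::real^'m), -b) \<noteq> 0" using that by (simp add: zero_prod_def)
      moreover have "\<forall>x\<in>T2. \<forall>z\<in>Z. ((0::real^'m), -b) \<bullet> (vecPhiI I0'' D\<phi> D\<psi> x + (1/2) *\<^sub>R vecPhiI I0'' D2\<phi> D2\<psi> y) \<le> ((0::real^'m), -b) \<bullet> (z, 0)"
      proof (intro ballI)
        fix x z assume "x \<in> T2" "z \<in> Z"
        then have "0 \<le> b \<bullet> Kp x" using ge by blast
        moreover have "snd (vecPhiI I0'' D\<phi> D\<psi> x + (1/2) *\<^sub>R vecPhiI I0'' D2\<phi> D2\<psi> y) = Kp x"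
          using Kf_snd[of x] unfolding Kf_def .
        ultimately show "((0::real^'m), -b) \<bullet> (vecPhiI I0'' D\<phi> D\<psi> x + (1/2) *\<^sub>R vecPhiI I0'' D2\<phi> D2\<psi> y) \<le> ((0::real^'m), -b) \<bullet> (z, 0)"
          unfolding inner_prod_def by simp
      qed
      ultimately have "\<exists>L :: (real^'m) \<times> (real^'k). L \<noteq> 0 \<and>
            (\<forall>x \<in> T2. \<forall>z \<in> Z. L \<bullet> (vecPhiI I0'' D\<phi> D\<psi> x + (1/2) *\<^sub>R vecPhiI I0'' D2\<phi> D2\<psi> y)
                                 \<le> L \<bullet> (z, 0))" by (intro exI[of _ "((0::real^'m), -b)"] conjI)
      then show False using noL by (rule notE[rotated])
    qed
    have H2: "\<exists>w\<in>W. b \<bullet> w < 0" if bnz: "b \<noteq> 0" for b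
    proof -
      obtain x1 where x1: "x1 \<in> T2" "b \<bullet> Kp x1 < 0" using H1[OF bnz] by blast
      have ev: "\<forall>\<^sub>F t in at_right (0::real). \<forall>i\<in>I0''. (1 - t) * kphi i x0 + t * kphi i x1 < 0"
      proof (rule eventually_ball_finite)
        show "finite I0''" by simp
        show "\<forall>i\<in>I0''. \<forall>\<^sub>F t in at_right 0. (1 - t) * kphi i x0 + t * kphi i x1 < 0"
        proof
          fix i assume i: "i \<in> I0''"
          have "((\<lambda>t. (1 - t) * kphi i x0 + t * kphi i x1) \<longlongrightarrow> (1 - 0) * kphi i x0 + 0 * kphi i x1) (at_right 0)"
            by (intro tendsto_intros)
          then show "\<forall>\<^sub>F t in at_right 0. (1 - t) * kphi i x0 + t * kphi i x1 < 0"
            using kphi0[OF i] order_tendstoD(2) by fastforce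
        qed
      qed
      then obtain bnd where bnd: "bnd > 0" "\<forall>t>0. t < bnd \<longrightarrow> (\<forall>i\<in>I0''. (1 - t) * kphi i x0 + t * kphi i x1 < 0)"
        unfolding eventually_at_right_field by auto
      define t where "t = min (bnd/2) (1/2)"
      have t: "0 < t" "t < bnd" "t < 1" using bnd(1) unfolding t_def by auto
      define xt where "xt = (1 - t) *\<^sub>R x0 + t *\<^sub>R x1"
      have "xt \<in> T2" unfolding xt_def using convexD[OF convT2 x0(1) x1(1), of "1 - t" t] t by simp
      moreover have "\<forall>i\<in>I0''. kphi i xt < 0"
        unfolding xt_def using kphi_aff[of "1 - t" t] bnd(2) t by simp
      ultimately have "xt \<in> T2m" unfolding T2m_def by blast
      moreover have "Kp xt = t *\<^sub>R Kp x1" unfolding xt_def using Kp_aff[of "1 - t" t x0 x1] Kp0 by simp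
      moreover have "b \<bullet> (t *\<^sub>R Kp x1) < 0" using t(1) x1(2) by (simp add: mult_pos_neg)
      ultimately show ?thesis unfolding W_def by force
    qed
    have int0: "0 \<in> interior W"
    proof (rule ccontr)
      assume nint: "0 \<notin> interior W"
      show False
      proof (cases "interior W = {}")
        case True
        then obtain a c where ac: "a \<noteq> 0" "W \<subseteq> {x. a \<bullet> x = c}"
          using empty_interior_subset_hyperplane[OF convW] by metis
        with W0 have "c = 0" by auto
        with ac H2[OF ac(1)] show False by fastforce
      next
        case False
        from separating_hyperplane_set_0[OF convex_interior[OF convW] nint] obtain a where
          a: "a \<noteq> 0" "\<forall>x\<in>interior W. 0 \<le> a \<bullet> x" by blast
        have "\<forall>w\<in>W. 0 \<le> a \<bullet> w"
        proof
          fix w assume "w \<in> W"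
          then have "w \<in> closure (interior W)"
            using convex_closure_interior[OF convW False] closure_subset by blast
          moreover have "closed {x. 0 \<le> a \<bullet> x}" using closed_halfspace_ge[of 0 a] by simp
          moreover have "interior W \<subseteq> {x. 0 \<le> a \<bullet> x}" using a(2) by blast
          ultimately show "0 \<le> a \<bullet> w" using closure_minimal by blast
        qed
        with H2[OF a(1)] show False by force
      qed
    qed
    show "subspace A \<and> d > 0 \<and>
         (\<exists>h :: nat \<Rightarrow> 'x. (\<forall>l \<in> {1..d+1}. h l \<in> T2) \<and>
            (\<exists>\<delta>0 > 0. {v \<in> A. norm v \<le> \<delta>0}
                 \<subseteq> (top_of_set A) interior_of
                     (convex hull {D\<psi> (h l) + (1/2) *\<^sub>R D2\<psi> y | l. l \<in> {1..d+1}})) \<and>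
            (\<forall>l \<in> {1..d+1}. \<forall>i \<in> I0''. D\<phi> i (h l) + (1/2) * D2\<phi> i y < 0))"
    proof -
    obtain \<rho> where \<rho>: "\<rho> > 0" "cball 0 \<rho> \<subseteq> W" using int0 mem_interior_cball by blast
    have W_sub: "W \<subseteq> K\<psi>" unfolding W_def T2m_def Kpsi_eq by auto
    have "interior K\<psi> \<noteq> {}" using int0 interior_mono[OF W_sub] by blast
    then have AU: "A = UNIV" unfolding A_def by (rule affine_hull_nonempty_interior)
    have dk: "d = CARD('k)" unfolding d_def AU by simp
    obtain c :: "real^'k" where c: "c \<in> interior (convex hull (insert 0 Basis))"
      by (rule interior_std_simplex_nonempty)
    then obtain r where r: "r > 0" "ball c r \<subseteq> convex hull (insert 0 Basis)"
      by (meson interior_subset mem_interior order_trans)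
    define S0 where "S0 = insert (0::real^'k) Basis"
    define \<epsilon> where "\<epsilon> = \<rho> / (norm c + 1)"
    have \<epsilon>: "\<epsilon> > 0" unfolding \<epsilon>_def using \<rho>(1) by (simp add: add_nonneg_pos)
    define f where "f v = (- (\<epsilon> *\<^sub>R c)) + \<epsilon> *\<^sub>R v" for v :: "real^'k"
    define S where "S = f ` S0"
    have S_W: "S \<subseteq> W"
    proof
      fix s assume "s \<in> S"
      then obtain v where v: "v \<in> S0" "s = f v" unfolding S_def by blast
      have nv: "norm v \<le> 1" using v(1) unfolding S0_def by (auto simp: norm_Basis)
      have "s = \<epsilon> *\<^sub>R (v - c)" unfolding v(2) f_def by (simp add: algebra_simps)
      then have "norm s = \<epsilon> * norm (v - c)" using \<epsilon> by simp
      also have "\<dots> \<le> \<epsilon> * (norm c + 1)"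
        using norm_triangle_ineq4[of v c] nv \<epsilon> by (intro mult_left_mono) auto
      also have "\<dots> = \<rho>"
      proof -
        have np: "norm c + 1 \<noteq> 0" "1 + norm c \<noteq> 0" using norm_ge_zero[of c] by linarith+
        then show ?thesis unfolding \<epsilon>_def by (simp add: field_simps)
      qed
      finally show "s \<in> W" using \<rho>(2) by auto
    qed
    have hullS: "convex hull S = f ` (convex hull S0)" unfolding S_def f_def by (rule convex_hull_affinity)
    have ball_sub: "ball 0 (\<epsilon> * r) \<subseteq> convex hull S"
    proof
      fix w :: "real^'k" assume "w \<in> ball 0 (\<epsilon> * r)"
      then have nw: "norm w < \<epsilon> * r" by simp
      define v where "v = c + (1/\<epsilon>) *\<^sub>R w"
      have "dist c v = norm w / \<epsilon>" unfolding v_def dist_norm using \<epsilon> by simp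
      also have "\<dots> < r" using nw \<epsilon> by (simp add: divide_less_eq mult.commute)
      finally have "v \<in> convex hull S0" using r(2) unfolding S0_def by auto
      moreover have "f v = w" unfolding f_def v_def using \<epsilon> by (simp add: algebra_simps)
      ultimately show "w \<in> convex hull S" unfolding hullS by blast
    qed
    have int_ball: "ball 0 (\<epsilon> * r) \<subseteq> interior (convex hull S)"
      by (rule interior_maximal[OF ball_sub open_ball])
    have finS0: "finite S0" unfolding S0_def by simp
    have cardS0: "card S0 = d + 1" unfolding S0_def dk by (simp add: zero_not_in_Basis)
    obtain e where e: "bij_betw e {1..card S0} S0" using ex_bij_betw_nat_finite_1[OF finS0] by blast
    have "\<forall>s\<in>S. \<exists>x. x \<in> T2m \<and> Kp x = s" using S_W unfolding W_def by blast
    from bchoice[OF this] obtain g where g: "\<forall>s\<in>S. g s \<in> T2m \<and> Kp (g s) = s" by blast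
    define h where "h l = g (f (e l))" for l
    have hS: "f (e l) \<in> S" if "l \<in> {1..d+1}" for l
      using bij_betw_apply[OF e] that cardS0 unfolding S_def by auto
    have hT: "h l \<in> T2m" "Kp (h l) = f (e l)" if "l \<in> {1..d+1}" for l
      using g hS[OF that] unfolding h_def by auto
    have set_eq: "{D\<psi> (h l) + (1/2) *\<^sub>R D2\<psi> y | l. l \<in> {1..d+1}} = S"
    proof -
      have "{D\<psi> (h l) + (1/2) *\<^sub>R D2\<psi> y | l. l \<in> {1..d+1}} = (\<lambda>l. Kp (h l)) ` {1..d+1}"
        unfolding Kp_def by blast
      also have "\<dots> = (\<lambda>l. f (e l)) ` {1..d+1}"
        by (rule image_cong[OF refl hT(2)])
      also have "\<dots> = f ` (e ` {1..card S0})" using cardS0 by (simp add: image_image)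
      also have "\<dots> = S" using bij_betw_imp_surj_on[OF e] unfolding S_def by simp
      finally show ?thesis .
    qed
    have sub1: "{v \<in> A. norm v \<le> \<epsilon> * r / 2} \<subseteq> top_of_set A interior_of
              (convex hull {D\<psi> (h l) + (1/2) *\<^sub>R D2\<psi> y | l. l \<in> {1..d+1}})"
      unfolding set_eq AU
    proof (intro subsetI)
      fix v :: "real^'k" assume "v \<in> {v \<in> UNIV. norm v \<le> \<epsilon> * r / 2}"
      moreover have "\<epsilon> * r > 0" using \<epsilon> r(1) by simp
      ultimately have "v \<in> ball 0 (\<epsilon> * r)" by simp
      then show "v \<in> top_of_set UNIV interior_of (convex hull S)" using int_ball by auto
    qed
    have pos: "\<epsilon> * r / 2 > 0" using \<epsilon> r(1) by simp
    have ex: "\<exists>\<delta>0 > 0. {v \<in> A. norm v \<le> \<delta>0}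
                 \<subseteq> (top_of_set A) interior_of
                     (convex hull {D\<psi> (h l) + (1/2) *\<^sub>R D2\<psi> y | l. l \<in> {1..d+1}})"
      using sub1 pos by (intro exI[of _ "\<epsilon> * r / 2"] conjI)
    have hT2: "\<forall>l \<in> {1..d+1}. h l \<in> T2" using hT(1) unfolding T2m_def by blast
    have hphi: "\<forall>l \<in> {1..d+1}. \<forall>i \<in> I0''. D\<phi> i (h l) + (1/2) * D2\<phi> i y < 0"
      using hT(1) unfolding T2m_def kphi_def by blast
    have sA: "subspace A" unfolding AU by simp
    have dpos: "d > 0" unfolding dk by simp
    show ?thesis using sA dpos hT2 ex hphi by (intro conjI exI[of _ h])
    qed
  qed
qed


theorem lemma4p1:
  fixes E :: "'x::banach set"
    and i0 :: "'m::finite"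
    and \<phi> D\<phi> D2\<phi> :: "'m \<Rightarrow> 'x \<Rightarrow> real"
    and \<psi> D\<psi> D2\<psi> :: "'x \<Rightarrow> real^'k::finite"
    and eb y :: 'x
  assumes convE: "convex E"
    and minim: "minimizer_OP E i0 \<phi> \<psi> eb"
    and phi0: "\<phi> i0 eb = 0"
    and C5: "cond_C5 \<phi> \<psi> D\<phi> D\<psi> D2\<phi> D2\<psi> eb"
    and y_tan: "y \<in> adj_tangent E eb"
    and y_IA: "\<forall>i \<in> {i. i \<noteq> i0 \<and> \<phi> i eb = 0} \<union> {i0}. D\<phi> i y \<le> 0"
    and y_psi: "D\<psi> y = 0"
    and T2_ne: "adj_tangent2 E eb y \<noteq> {}"
  shows
   "let IA = {i. i \<noteq> i0 \<and> \<phi> i eb = 0} \<union> {i0};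
        IN = {i. i \<noteq> i0 \<and> \<phi> i eb < 0};
        I0' = IN \<union> {i \<in> IA. D\<phi> i y < 0};
        I0'' = UNIV - I0';
        T2 = adj_tangent2 E eb y;
        K = {vecPhiI I0'' D\<phi> D\<psi> x + (1/2) *\<^sub>R vecPhiI I0'' D2\<phi> D2\<psi> y | x. x \<in> T2};
        K\<psi> = {D\<psi> x + (1/2) *\<^sub>R D2\<psi> y | x. x \<in> T2};
        Y = (\<chi> i. if i \<in> IA then D\<phi> i y else 0) :: real^'m;
        Z = {z - lam *\<^sub>R ((\<chi> i. \<phi> i eb) + Y) | z lam. (\<forall>i. z $ i < 0) \<and> lam > 0};
        A = affine hull K\<psi>;
        d = dim A
    in convex K \<and> convex K\<psi> \<and>
       ((\<nexists>L :: (real^'m) \<times> (real^'k). L \<noteq> 0 \<and>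
            (\<forall>x \<in> T2. \<forall>z \<in> Z. L \<bullet> (vecPhiI I0'' D\<phi> D\<psi> x + (1/2) *\<^sub>R vecPhiI I0'' D2\<phi> D2\<psi> y)
                                 \<le> L \<bullet> (z, 0))) \<longrightarrow>
        (subspace A \<and> d > 0 \<and>
         (\<exists>h :: nat \<Rightarrow> 'x. (\<forall>l \<in> {1..d+1}. h l \<in> T2) \<and>
            (\<exists>\<delta>0 > 0. {v \<in> A. norm v \<le> \<delta>0}
                 \<subseteq> (top_of_set A) interior_of
                     (convex hull {D\<psi> (h l) + (1/2) *\<^sub>R D2\<psi> y | l. l \<in> {1..d+1}})) \<and>
            (\<forall>l \<in> {1..d+1}. \<forall>i \<in> I0''. D\<phi> i (h l) + (1/2) * D2\<phi> i y < 0))))"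
    unfolding Let_def
  by (rule main_helper[OF convE minim phi0 C5 y_IA refl refl refl refl refl refl refl refl refl refl refl])

end
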